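(* For an algebraic range-query function $Q$, given an array of size $n$, Bin Buffering uses a buffer of $n/b$ tuples computed in time $O(n)$ and updated in time $O(b)$ to support queries in time $O(n/b+b)$. Choosing $b=\sqrt{n}$ minimizes the query complexity to $O(\sqrt{n})$. If $Q$ is linear then updates take constant time.
   Context: Arrays are indexed $a_0,\ldots,a_{n-1}$. A range-query function $Q:\mathcal{A}^{R}\to R$ (where $\mathcal{A}^R$ is the set of finite arrays with values in $R$) is distributive if there is $F$ with $Q(a_0,\ldots,a_k,a_{k+1},\ldots,a_{n-1})=F(Q(a_0,\ldots,a_k),Q(a_{k+1},\ldots,a_{n-1}))$ for all $0\le k<n-1$. A real-valued range-query function $Q$ is algebraic if it can be computed from an intermediate tuple-valued distributive range-query function $G:\mathcal{A}^{\mathbb{R}}\to\mathbb{R}^m$ ($m$ a small fixed integer) with combining function $F:\mathcal{A}^{\mathbb{R}^m}\to\mathbb{R}^m$, i.e. $G(a_0,\ldots,a_k,a_{k+1},\ldots,a_{n-1})=F(G(a_0,\ldots,a_k),G(a_{k+1},\ldots,a_{n-1}))$; the cost of $G$ and $F$ is assumed independent of the values and constant per combination. Bin Buffering: given an integer $b$ dividing $n$, precompute the $n/b$ components $B_0=G(a_0,\ldots,a_{b-1})$, $B_1=G(a_b,\ldots,a_{2b-1})$, $\ldots$, $B_{n/b-1}=G(a_{n-b},\ldots,a_{n-1})$, and answer queries via $G(a_k,\ldots,a_l)=F(G(a_k,\ldots,a_{b\lceil k/b\rceil-1}),B_{\lceil k/b\rceil},\ldots,B_{\lfloor l/b\rfloor-1},G(a_{b\lfloor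 l/b\rfloor},\ldots,a_l))$. An update changes one array entry $a_k$ by $\Delta=a'_k-a_k$. $Q$ (with intermediate $G$) is linear if $G(a_0+\alpha d_0,\ldots,a_{n-1}+\alpha d_{n-1})=G(a_0,\ldots,a_{n-1})+\alpha G(d_0,\ldots,d_{n-1})$ for all arrays $a,d$ and constants $\alpha$. *)

theory Defs
  imports "HOL-Analysis.Analysis"
begin

definition seg :: "'r list \<Rightarrow> nat \<Rightarrow> nat \<Rightarrow> 'r list" where
  "seg a i j = take (j - i) (drop i a)"

definition distributive_rq :: "('r list \<Rightarrow> 'b) \<Rightarrow> ('b \<Rightarrow> 'b \<Rightarrow> 'b) \<Rightarrow> bool" where
  "distributive_rq G F \<longleftrightarrow>
     (\<forall>xs ys. xs \<noteq> [] \<longrightarrow> ys \<noteq> [] \<longrightarrow> G (xs @ ys) = F (G xs) (G ys))"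

definition linear_rq :: "(real list \<Rightarrow> 'b::real_vector) \<Rightarrow> bool" where
  "linear_rq G \<longleftrightarrow>
     (\<forall>a d (\<alpha>::real). length a = length d \<longrightarrow>
        G (map2 (\<lambda>x y. x + \<alpha> * y) a d) = G a + \<alpha> *\<^sub>R G d)"

text \<open>Cost model: every algorithm returns (result, cost) where the cost counts
  the primitive operations: evaluations of G on a single entry, applications of F,
  and (in the linear update) one vector addition.\<close>

fun gfold :: "('r list \<Rightarrow> 'b) \<Rightarrow> ('b \<Rightarrow> 'b \<Rightarrow> 'b) \<Rightarrow> 'r \<Rightarrow> 'r list \<Rightarrow> 'b \<times> nat" where
  "gfold G F x [] = (G [x], 1)"
| "gfold G F x (y # ys) = (case gfold G F y ys of (v, c) \<Rightarrow> (F (G [x]) v, c + 2))"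

definition evalseq :: "('r list \<Rightarrow> 'b) \<Rightarrow> ('b \<Rightarrow> 'b \<Rightarrow> 'b) \<Rightarrow> 'r list \<Rightarrow> 'b \<times> nat" where
  "evalseq G F xs = (case xs of [] \<Rightarrow> (G [], 0) | x # ys \<Rightarrow> gfold G F x ys)"

fun fcomb :: "('b \<Rightarrow> 'b \<Rightarrow> 'b) \<Rightarrow> 'b \<Rightarrow> 'b list \<Rightarrow> 'b \<times> nat" where
  "fcomb F v [] = (v, 0)"
| "fcomb F v (w # ws) = (case fcomb F w ws of (r, c) \<Rightarrow> (F v r, c + 1))"

definition is_buffer :: "('r list \<Rightarrow> 'b) \<Rightarrow> nat \<Rightarrow> 'r list \<Rightarrow> 'b list \<Rightarrow> bool" where
  "is_buffer G b a B \<longleftrightarrow> length B = length a div b \<and>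
     (\<forall>j < length B. B ! j = G (seg a (j * b) (j * b + b)))"

definition build_buffer :: "('r list \<Rightarrow> 'b) \<Rightarrow> ('b \<Rightarrow> 'b \<Rightarrow> 'b) \<Rightarrow> nat \<Rightarrow> 'r list \<Rightarrow> 'b list \<times> nat" where
  "build_buffer G F b a =
     (let blk = (\<lambda>j. evalseq G F (seg a (j * b) (j * b + b)));
          js = [0..<length a div b]
      in (map (\<lambda>j. fst (blk j)) js, sum_list (map (\<lambda>j. snd (blk j)) js)))"

text \<open>Query G(a_k,...,a_l) using the buffer, following
  G(a_k..a_l) = F(G(a_k..a_(b*ceil(k/b)-1)), B_(ceil(k/b)),...,B_(floor(l/b)-1), G(a_(b*floor(l/b))..a_l)),
  omitting empty pieces; if k and l lie strictly inside the same bin, G is computed directly.\<close>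
definition bb_query :: "('r list \<Rightarrow> 'b) \<Rightarrow> ('b \<Rightarrow> 'b \<Rightarrow> 'b) \<Rightarrow> nat \<Rightarrow> 'r list \<Rightarrow> 'b list
    \<Rightarrow> nat \<Rightarrow> nat \<Rightarrow> 'b \<times> nat" where
  "bb_query G F b a B k l =
     (let p = b * ((k + b - 1) div b); q = b * (l div b) in
      if q < p then evalseq G F (seg a k (Suc l))
      else
        (case evalseq G F (seg a q (Suc l)) of (sv, sc) \<Rightarrow>
          (let mids = map (\<lambda>i. B ! i) [p div b..<q div b] in
           (case fcomb F (hd (mids @ [sv])) (tl (mids @ [sv])) of (r, cr) \<Rightarrow>
             (if k < p then
                (case evalseq G F (seg a k p) of (pv, pc) \<Rightarrow> (F pv r, pc + sc + cr + 1))
              else (r, sc + cr))))))"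

definition bb_update :: "('r list \<Rightarrow> 'b) \<Rightarrow> ('b \<Rightarrow> 'b \<Rightarrow> 'b) \<Rightarrow> nat \<Rightarrow> 'r list \<Rightarrow> 'b list
    \<Rightarrow> nat \<Rightarrow> 'r \<Rightarrow> 'b list \<times> nat" where
  "bb_update G F b a B k x =
     (let j = k div b in
      case evalseq G F (seg (a[k := x]) (j * b) (j * b + b)) of (v, c) \<Rightarrow> (B[j := v], c))"

text \<open>Update for linear G: B_j := B_j + G(0,..,0,\<Delta>,0,..,0), where the correction is
  computed as F(F(G(0..0), G[\<Delta>]), G(0..0)) using G(0..0) = 0 (a consequence of linearity).\<close>
definition bb_lin_update :: "(real list \<Rightarrow> 'b::real_vector) \<Rightarrow> ('b \<Rightarrow> 'b \<Rightarrow> 'b) \<Rightarrow> nat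
    \<Rightarrow> real list \<Rightarrow> 'b list \<Rightarrow> nat \<Rightarrow> real \<Rightarrow> 'b list \<times> nat" where
  "bb_lin_update G F b a B k x =
     (let j = k div b; i = k mod b; \<Delta> = x - a ! k;
          v0 = G [\<Delta>];
          v1 = (if 0 < i then F 0 v0 else v0);
          v2 = (if i < b - 1 then F v1 0 else v1)
      in (B[j := B ! j + v2],
          1 + (if 0 < i then 1 else 0) + (if i < b - 1 then 1 else 0) + 1))"

end

theory Submission
  imports Defs
begin

lemma gfold_cost: "snd (gfold G F x ys) = 2 * length ys + 1"
  by (induction ys arbitrary: x) (auto simp: split_beta)

lemma gfold_val: "distributive_rq G F \<Longrightarrow> fst (gfold G F x ys) = G (x # ys)"
proof (induction ys arbitrary: x)
  case Nil then show ?case by simp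
next
  case (Cons y ys)
  have "G ([x] @ (y # ys)) = F (G [x]) (G (y # ys))" using Cons.prems unfolding distributive_rq_def by blast
  then show ?case using Cons by (auto simp: split_beta)
qed

lemma evalseq_cost: "snd (evalseq G F xs) \<le> 2 * length xs"
  by (cases xs) (auto simp: evalseq_def gfold_cost)

lemma evalseq_val: "distributive_rq G F \<Longrightarrow> fst (evalseq G F xs) = G xs"
  by (cases xs) (auto simp: evalseq_def gfold_val)

lemma fcomb_cost: "snd (fcomb F v ws) = length ws"
  by (induction ws arbitrary: v) (auto simp: split_beta)

lemma fcomb_val: "distributive_rq G F \<Longrightarrow> x \<noteq> [] \<Longrightarrow> \<forall>ys\<in>set yss. ys \<noteq> [] \<Longrightarrow>
   fst (fcomb F (G x) (map G yss)) = G (x @ concat yss)"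
proof (induction yss arbitrary: x)
  case Nil then show ?case by simp
next
  case (Cons y yss)
  have "fst (fcomb F (G y) (map G yss)) = G (y @ concat yss)" using Cons by auto
  moreover have "G (x @ (y @ concat yss)) = F (G x) (G (y @ concat yss))"
    using Cons.prems unfolding distributive_rq_def by auto
  ultimately show ?case by (auto split: prod.split)
qed

lemma seg_app: "i \<le> j \<Longrightarrow> j \<le> k \<Longrightarrow> seg a i j @ seg a j k = seg a i k"
proof -
  assume "i \<le> j" "j \<le> k"
  then have e: "k - i = (j - i) + (k - j)" by simp
  have "take (k - i) (drop i a) = take (j - i) (drop i a) @ take (k - j) (drop (j - i) (drop i a))"
    unfolding e by (rule take_add)
  then show ?thesis using \<open>i \<le> j\<close> by (simp add: seg_def)
qed

lemma seg_len: "length (seg a i j) = min (j - i) (length a - i)"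
  by (simp add: seg_def)

lemma blocks_concat: "concat (map (\<lambda>i. seg a (i * b) (i * b + b)) [u..<v]) = seg a (u * b) (v * b)"
proof (induction v)
  case 0 then show ?case by (simp add: seg_def)
next
  case (Suc v)
  show ?case
  proof (cases "u \<le> v")
    case True
    have "seg a (u * b) (v * b) @ seg a (v * b) (v * b + b) = seg a (u * b) (Suc v * b)"
      using True by (subst seg_app) (auto simp: mult_le_mono1 add.commute)
    then show ?thesis using Suc True by simp
  next
    case False
    then have "Suc v * b \<le> u * b" by (intro mult_le_mono1) simp
    then show ?thesis using False by (simp add: seg_def)
  qed
qed


lemma pq_facts:
  fixes b k l :: nat
  assumes "0 < b"
  shows "k \<le> b * ((k + b - 1) div b)" "b * ((k + b - 1) div b) < k + b"
    "b * (l div b) \<le> l" "l < b * (l div b) + b"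
proof -
  have "(k + b - 1) = b * ((k + b - 1) div b) + (k + b - 1) mod b" by simp
  moreover have "(k + b - 1) mod b < b" using assms by simp
  ultimately show "k \<le> b * ((k + b - 1) div b)" "b * ((k + b - 1) div b) < k + b" by linarith+
  have "l = b * (l div b) + l mod b" by simp
  moreover have "l mod b < b" using assms by simp
  ultimately show "b * (l div b) \<le> l" "l < b * (l div b) + b" by linarith+
qed

lemma query_cost_nat:
  assumes b: "0 < b" and kl: "k \<le> l" and ln: "l < length a"
  shows "snd (bb_query G F b a B k l) \<le> 4 * b + 1 + length a div b"
proof -
  define p where "p = b * ((k + b - 1) div b)"
  define q where "q = b * (l div b)"
  have f: "k \<le> p" "p < k + b" "q \<le> l" "l < q + b"
    using pq_facts(1,2)[of b k, OF b] pq_facts(3,4)[of b l, OF b] unfolding p_def q_def by auto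
  show ?thesis
  proof (cases "q < p")
    case True
    have "(l div b) < ((k + b - 1) div b)" using True unfolding p_def q_def by simp
    then have "Suc (l div b) \<le> ((k + b - 1) div b)" by simp
    then have "b * Suc (l div b) \<le> p" unfolding p_def by (rule mult_le_mono2)
    then have "q + b \<le> p" unfolding q_def by simp
    then have "Suc l - k \<le> b" using f by linarith
    then have "snd (evalseq G F (seg a k (Suc l))) \<le> 2 * b"
      using evalseq_cost[of G F "seg a k (Suc l)"] seg_len[of a k "Suc l"] by linarith
    then show ?thesis using True unfolding bb_query_def Let_def p_def[symmetric] q_def[symmetric] by simp
  next
    case False
    define mids where "mids = map (\<lambda>i. B ! i) [p div b..<q div b]"
    have c1: "snd (evalseq G F (seg a k p)) \<le> 2 * b"
      using evalseq_cost[of G F "seg a k p"] seg_len[of a k p] f by linarith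
    have c2: "snd (evalseq G F (seg a q (Suc l))) \<le> 2 * b"
      using evalseq_cost[of G F "seg a q (Suc l)"] seg_len[of a q "Suc l"] f by linarith
    have c3: "snd (fcomb F (hd (mids @ [x])) (tl (mids @ [x]))) \<le> length a div b" for x
    proof -
      have "snd (fcomb F (hd (mids @ [x])) (tl (mids @ [x]))) = length mids"
        by (simp add: fcomb_cost)
      also have "\<dots> \<le> q div b" unfolding mids_def by simp
      also have "\<dots> \<le> length a div b" unfolding q_def using b ln by (simp add: div_le_mono)
      finally show ?thesis .
    qed
    show ?thesis using False c1 c2 c3[of "fst (evalseq G F (seg a q (Suc l)))"]
      unfolding bb_query_def Let_def p_def[symmetric] q_def[symmetric] mids_def[symmetric]
      by (auto simp: split_beta)
  qed
qed

lemma query_cost: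
  assumes b: "0 < b" and kl: "k \<le> l" and ln: "l < length a"
  shows "real (snd (bb_query G F b a B k l)) \<le> 5 * (real (length a) / real b + real b)"
proof -
  have "real (snd (bb_query G F b a B k l)) \<le> 4 * real b + 1 + real (length a div b)"
    using query_cost_nat[OF assms, of G F B] by linarith
  moreover have "real (length a div b) \<le> real (length a) / real b"
  proof -
    have "(length a div b) * b \<le> length a" by simp
    then have "real (length a div b) * real b \<le> real (length a)" by (metis of_nat_le_iff of_nat_mult)
    then show ?thesis using b by (simp add: pos_le_divide_eq)
  qed
  moreover have "1 \<le> real b" "0 \<le> real (length a) / real b" using b by auto
  ultimately show ?thesis unfolding distrib_left by linarith
qed


lemma seg_ne: "i < j \<Longrightarrow> i < length a \<Longrightarrow> seg a i j \<noteq> []"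
  by (simp add: seg_def)

lemma query_val:
  assumes dist: "distributive_rq G F" and b: "0 < b" and kl: "k \<le> l" and ln: "l < length a"
    and buf: "is_buffer G b a B"
  shows "fst (bb_query G F b a B k l) = G (seg a k (Suc l))"
proof -
  define p where "p = b * ((k + b - 1) div b)"
  define q where "q = b * (l div b)"
  have f: "k \<le> p" "p < k + b" "q \<le> l" "l < q + b"
    using pq_facts(1,2)[of b k, OF b] pq_facts(3,4)[of b l, OF b] unfolding p_def q_def by auto
  show ?thesis
  proof (cases "q < p")
    case True
    then show ?thesis unfolding bb_query_def Let_def p_def[symmetric] q_def[symmetric]
      by (simp add: evalseq_val[OF dist])
  next
    case False
    define mids where "mids = map (\<lambda>i. B ! i) [p div b..<q div b]"
    define L where "L = map (\<lambda>i. seg a (i * b) (i * b + b)) [p div b..<q div b] @ [seg a q (Suc l)]"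
    have pb: "p div b * b = p" unfolding p_def using b by simp
    have qb: "q div b * b = q" unfolding q_def using b by simp
    have lenB: "length B = length a div b" using buf unfolding is_buffer_def by simp
    have "map (\<lambda>i. B ! i) [p div b..<q div b] = map G (map (\<lambda>i. seg a (i * b) (i * b + b)) [p div b..<q div b])"
    proof (rule map_cong[THEN trans])
      show "[p div b..<q div b] = [p div b..<q div b]" by simp
      fix i assume "i \<in> set [p div b..<q div b]"
      then have "i < q div b" by simp
      also have "q div b \<le> length a div b" unfolding q_def using b ln by (simp add: div_le_mono)
      finally have "i < length B" using lenB by simp
      then show "B ! i = G (seg a (i * b) (i * b + b))" using buf unfolding is_buffer_def by blast
    next
      show "map (\<lambda>x. G (seg a (x * b) (x * b + b))) [p div b..<q div b] = map G (map (\<lambda>i. seg a (i * b) (i * b + b)) [p div b..<q div b])" by simp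
    qed
    then have mL: "mids @ [G (seg a q (Suc l))] = map G L" unfolding mids_def L_def by simp
    have Lne: "L \<noteq> []" unfolding L_def by simp
    have Lall: "\<forall>ys\<in>set L. ys \<noteq> []"
    proof
      fix ys assume "ys \<in> set L"
      then consider i where "i < q div b" "ys = seg a (i * b) (i * b + b)" | "ys = seg a q (Suc l)"
        unfolding L_def by auto
      then show "ys \<noteq> []"
      proof cases
        case 1
        then have "Suc i \<le> q div b" by simp
        then have "Suc i * b \<le> q div b * b" by (rule mult_le_mono1)
        then have "i * b + b \<le> q" using qb by simp
        then show ?thesis unfolding 1(2) using 1 b f ln by (intro seg_ne) auto
      next
        case 2 then show ?thesis unfolding 2 using f ln by (intro seg_ne) auto
      qed
    qed
    have cL: "concat L = seg a p (Suc l)"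
    proof -
      have "concat L = seg a (p div b * b) (q div b * b) @ seg a q (Suc l)"
        unfolding L_def by (simp add: blocks_concat)
      also have "\<dots> = seg a p (Suc l)" unfolding pb qb using False f by (intro seg_app) auto
      finally show ?thesis .
    qed
    have fc: "fst (fcomb F (hd (mids @ [G (seg a q (Suc l))])) (tl (mids @ [G (seg a q (Suc l))]))) = G (seg a p (Suc l))"
    proof -
      obtain y ys where L: "L = y # ys" using Lne by (cases L) auto
      have "fst (fcomb F (G y) (map G ys)) = G (y @ concat ys)"
        using Lall L by (intro fcomb_val[OF dist]) auto
      then show ?thesis unfolding mL using cL L by simp
    qed
    have last: "fst (if k < p then (F (G (seg a k p)) (G (seg a p (Suc l))), c1) else (G (seg a p (Suc l)), c2))
       = G (seg a k (Suc l))" for c1 c2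
    proof (cases "k < p")
      case True
      have "G (seg a k p @ seg a p (Suc l)) = F (G (seg a k p)) (G (seg a p (Suc l)))"
        using dist unfolding distributive_rq_def
        using seg_ne[of k p a] seg_ne[of p "Suc l" a] True f ln False by auto
      moreover have "seg a k p @ seg a p (Suc l) = seg a k (Suc l)" using True f False by (intro seg_app) auto
      ultimately show ?thesis using True by simp
    next
      case False then show ?thesis using f by simp
    qed
    show ?thesis using False fc last
      unfolding bb_query_def Let_def p_def[symmetric] q_def[symmetric] mids_def[symmetric]
      by (auto simp: split_beta evalseq_val[OF dist])
  qed
qed


lemma build_ok:
  assumes dist: "distributive_rq G F" and b: "0 < b"
  shows "is_buffer G b a (fst (build_buffer G F b a))"
    "length (fst (build_buffer G F b a)) = length a div b"
    "snd (build_buffer G F b a) \<le> 2 * length a"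
proof -
  show "is_buffer G b a (fst (build_buffer G F b a))"
    by (simp add: is_buffer_def build_buffer_def Let_def evalseq_val[OF dist])
  show "length (fst (build_buffer G F b a)) = length a div b"
    by (simp add: build_buffer_def Let_def)
  have "snd (build_buffer G F b a) \<le> (\<Sum>j\<leftarrow>[0..<length a div b]. 2 * b)"
    unfolding build_buffer_def Let_def snd_conv
  proof (rule sum_list_mono)
    fix j
    show "snd (evalseq G F (seg a (j * b) (j * b + b))) \<le> 2 * b"
      using evalseq_cost[of G F "seg a (j * b) (j * b + b)"] seg_len[of a "j * b" "j * b + b"] by linarith
  qed
  also have "\<dots> = (length a div b) * (2 * b)" by (simp add: sum_list_triv)
  also have "\<dots> \<le> 2 * length a"
  proof -
    have "(length a div b) * b \<le> length a" by simp
    then show ?thesis by simp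
  qed
  finally show "snd (build_buffer G F b a) \<le> 2 * length a" .
qed

lemma seg_update: "k < i \<or> j \<le> k \<Longrightarrow> seg (a[k := x]) i j = seg a i j"
  by (rule nth_equalityI) (auto simp: seg_def nth_list_update)

lemma buf_upd:
  assumes buf: "is_buffer G b a B" and b: "0 < b" and dvd: "b dvd length a" and k: "k < length a"
  shows "is_buffer G b (a[k := x]) (B[k div b := G (seg (a[k := x]) (k div b * b) (k div b * b + b))])"
proof -
  have lenB: "length B = length a div b" using buf unfolding is_buffer_def by simp
  show ?thesis unfolding is_buffer_def
  proof (intro conjI allI impI)
    show "length (B[k div b := G (seg (a[k := x]) (k div b * b) (k div b * b + b))]) = length (a[k := x]) div b"
      using lenB by simp
    fix i assume i: "i < length (B[k div b := G (seg (a[k := x]) (k div b * b) (k div b * b + b))])"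
    show "B[k div b := G (seg (a[k := x]) (k div b * b) (k div b * b + b))] ! i = G (seg (a[k := x]) (i * b) (i * b + b))"
    proof (cases "i = k div b")
      case True then show ?thesis using i by simp
    next
      case False
      have "k < i * b \<or> i * b + b \<le> k"
      proof (rule ccontr)
        assume "\<not> ?thesis"
        then have "b * i \<le> k" "k < b * Suc i" by (auto simp: mult.commute)
        then have "k div b = i" by (rule div_nat_eqI)
        then show False using False by simp
      qed
      then have "seg (a[k := x]) (i * b) (i * b + b) = seg a (i * b) (i * b + b)" by (rule seg_update)
      then show ?thesis using False i buf unfolding is_buffer_def by simp
    qed
  qed
qed

lemma update_ok:
  assumes dist: "distributive_rq G F" and buf: "is_buffer G b a B" and b: "0 < b"
    and dvd: "b dvd length a" and k: "k < length a"
  shows "is_buffer G b (a[k := x]) (fst (bb_update G F b a B k x))"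
    "snd (bb_update G F b a B k x) \<le> 2 * b"
proof -
  show "is_buffer G b (a[k := x]) (fst (bb_update G F b a B k x))"
    using buf_upd[OF buf b dvd k, of x]
    by (simp add: bb_update_def Let_def split_beta evalseq_val[OF dist])
  show "snd (bb_update G F b a B k x) \<le> 2 * b"
    using evalseq_cost[of G F "seg (a[k := x]) (k div b * b) (k div b * b + b)"]
      seg_len[of "a[k := x]" "k div b * b" "k div b * b + b"]
    by (simp add: bb_update_def Let_def split_beta)
qed


lemma lin_zero:
  assumes lin: "linear_rq G" shows "G (replicate m 0) = 0"
proof -
  have "G (map2 (\<lambda>x y. x + 1 * y) (replicate m 0) (replicate m 0)) = G (replicate m 0) + 1 *\<^sub>R G (replicate m 0)"
    using lin unfolding linear_rq_def by blast
  moreover have "map2 (\<lambda>x y. x + 1 * y) (replicate m (0::real)) (replicate m 0) = replicate m 0"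
    by (induction m) auto
  ultimately show ?thesis by simp
qed

lemma lin_update_ok:
  fixes G :: "real list \<Rightarrow> 'b::real_vector"
  assumes dist: "distributive_rq G F" and lin: "linear_rq G" and buf: "is_buffer G b a B" and b: "0 < b"
    and dvd: "b dvd length a" and k: "k < length a"
  shows "is_buffer G b (a[k := x]) (fst (bb_lin_update G F b a B k x))"
    "snd (bb_lin_update G F b a B k x) \<le> 4"
proof -
  define j where "j = k div b"
  define i where "i = k mod b"
  define D where "D = x - a ! k"
  define v1 where "v1 = (if 0 < i then F 0 (G [D]) else G [D])"
  define v2 where "v2 = (if i < b - 1 then F v1 0 else v1)"
  define d where "d = replicate i 0 @ [D] @ replicate (b - 1 - i) (0::real)"
  have ib: "i < b" unfolding i_def using b by simp
  have kji: "k = j * b + i" unfolding i_def j_def by simp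
  have jn: "j * b + b \<le> length a"
  proof -
    obtain m where m: "length a = b * m" using dvd by blast
    have "j < m" unfolding j_def using k m b by (simp add: less_mult_imp_div_less mult.commute)
    then have "Suc j * b \<le> m * b" by (intro mult_le_mono1) simp
    then show ?thesis using m by (simp add: mult.commute)
  qed
  have hv1: "v1 = G (replicate i 0 @ [D])"
  proof (cases "0 < i")
    case True
    then show ?thesis unfolding v1_def using dist lin_zero[OF lin, of i] unfolding distributive_rq_def by auto
  next
    case False then show ?thesis unfolding v1_def by simp
  qed
  have hv2: "v2 = G d"
  proof (cases "i < b - 1")
    case True
    have "G ((replicate i 0 @ [D]) @ replicate (b - 1 - i) 0) = F (G (replicate i 0 @ [D])) (G (replicate (b - 1 - i) 0))"
      using distributive_rq_def[THEN iffD1, OF dist, rule_format, of "replicate i 0 @ [D]" "replicate (b - 1 - i) 0"] True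
      by simp
    then show ?thesis unfolding v2_def d_def hv1 using True lin_zero[OF lin, of "b - 1 - i"] by simp
  next
    case False
    then have "b - 1 - i = 0" by simp
    then show ?thesis unfolding v2_def d_def hv1 using False by simp
  qed
  define old where "old = seg a (j * b) (j * b + b)"
  have lold: "length old = b" unfolding old_def seg_len using jn by simp
  have new: "seg (a[k := x]) (j * b) (j * b + b) = map2 (\<lambda>x y. x + 1 * y) old d"
  proof (rule nth_equalityI)
    show "length (seg (a[k := x]) (j * b) (j * b + b)) = length (map2 (\<lambda>x y. x + 1 * y) old d)"
      using lold jn by (simp add: seg_len d_def)
    fix t assume t: "t < length (seg (a[k := x]) (j * b) (j * b + b))"
    then have tb: "t < b" using jn by (simp add: seg_len)
    have dt: "d ! t = (if t = i then D else 0)"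
      unfolding d_def using tb ib by (auto simp: nth_append)
    have ot: "old ! t = a ! (j * b + t)" unfolding old_def seg_def using tb jn by simp
    show "seg (a[k := x]) (j * b) (j * b + b) ! t = map2 (\<lambda>x y. x + 1 * y) old d ! t"
      using tb jn lold ot dt kji k unfolding D_def
      by (auto simp: seg_def nth_list_update d_def)
  qed
  have lend: "length old = length d" using lold ib unfolding d_def by simp
  have "G (seg (a[k := x]) (j * b) (j * b + b)) = G old + 1 *\<^sub>R G d"
    unfolding new using lin lend unfolding linear_rq_def by blast
  moreover have "B ! j = G old"
  proof -
    have "Suc j * b \<le> length a" using jn by simp
    then have "Suc j \<le> length a div b" using b by (simp add: less_eq_div_iff_mult_less_eq)
    then have "j < length a div b" by simp
    then show ?thesis using buf unfolding is_buffer_def old_def by simp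
  qed
  ultimately have eq: "B ! j + v2 = G (seg (a[k := x]) (k div b * b) (k div b * b + b))"
    using hv2 unfolding j_def by simp
  show "is_buffer G b (a[k := x]) (fst (bb_lin_update G F b a B k x))"
    using buf_upd[OF buf b dvd k, of x] eq[symmetric]
    unfolding bb_lin_update_def Let_def j_def[symmetric] i_def[symmetric] D_def[symmetric]
       v1_def[symmetric] v2_def[symmetric] by simp
  show "snd (bb_lin_update G F b a B k x) \<le> 4"
    unfolding bb_lin_update_def Let_def by simp
qed


lemma sq_part:
  fixes s b :: nat assumes s: "0 < s" and b: "0 < b"
  shows "real (s^2) / real s + real s \<le> real (s^2) / real b + real b"
proof -
  have "0 \<le> (real s - real b)^2" by simp
  then have "2 * real s * real b \<le> real s ^ 2 + real b ^ 2" by (simp add: power2_eq_square algebra_simps)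
  then have "2 * real s \<le> real s ^ 2 / real b + real b" using b by (simp add: field_simps power2_eq_square)
  moreover have "real (s^2) / real s + real s = 2 * real s" using s by (simp add: power2_eq_square)
  ultimately show ?thesis by simp
qed

theorem lemma1:
  "\<exists>C_build C_query C_upd C_lin C_sqrt :: real.
     (\<forall>(G :: real list \<Rightarrow> real ^ 'm) F (n::nat) (b::nat) a.
        distributive_rq G F \<and> 0 < b \<and> b dvd n \<and> length a = n \<longrightarrow>
          is_buffer G b a (fst (build_buffer G F b a))
        \<and> length (fst (build_buffer G F b a)) = n div b
        \<and> real (snd (build_buffer G F b a)) \<le> C_build * real n
        \<and> (\<forall>B. is_buffer G b a B \<longrightarrow>
              (\<forall>k l. k \<le> l \<and> l < n \<longrightarrow>
                  fst (bb_query G F b a B k l) = G (seg a k (Suc l))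
                \<and> real (snd (bb_query G F b a B k l)) \<le> C_query * (real n / real b + real b))
            \<and> (\<forall>k x. k < n \<longrightarrow>
                  is_buffer G b (a[k := x]) (fst (bb_update G F b a B k x))
                \<and> real (snd (bb_update G F b a B k x)) \<le> C_upd * real b)
            \<and> (linear_rq G \<longrightarrow> (\<forall>k x. k < n \<longrightarrow>
                  is_buffer G b (a[k := x]) (fst (bb_lin_update G F b a B k x))
                \<and> real (snd (bb_lin_update G F b a B k x)) \<le> C_lin))))
   \<and> (\<forall>(n::nat) (s::nat). 0 < s \<and> n = s ^ 2 \<longrightarrow>
        (\<forall>b::nat. 0 < b \<longrightarrow> real n / real s + real s \<le> real n / real b + real b)
      \<and> real n / real s + real s = 2 * sqrt (real n)
      \<and> (\<forall>(G :: real list \<Rightarrow> real ^ 'm) F a B k l.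
           distributive_rq G F \<and> length a = n \<and> is_buffer G s a B \<and> k \<le> l \<and> l < n \<longrightarrow>
             real (snd (bb_query G F s a B k l)) \<le> C_sqrt * sqrt (real n)))"
proof (rule exI[of _ "2::real"], rule exI[of _ "5::real"], rule exI[of _ "2::real"], rule exI[of _ "4::real"], rule exI[of _ "10::real"], intro conjI allI impI)
  fix G :: "real list \<Rightarrow> real ^ 'm" and F n b and a :: "real list"
  assume h: "distributive_rq G F \<and> 0 < b \<and> b dvd n \<and> length a = n"
  then have dist: "distributive_rq G F" and b: "0 < b" and dvd: "b dvd length a" and n: "length a = n" by auto
  show "is_buffer G b a (fst (build_buffer G F b a))" using build_ok[OF dist b] by simp
  show "length (fst (build_buffer G F b a)) = n div b" using build_ok[OF dist b] n by simp
  show "real (snd (build_buffer G F b a)) \<le> 2 * real n" using build_ok(3)[OF dist b, of a] n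
    by (metis of_nat_le_iff of_nat_mult of_nat_numeral)
  fix B assume buf: "is_buffer G b a B"
  {
    fix k l assume kl: "k \<le> l \<and> l < n"
    show "fst (bb_query G F b a B k l) = G (seg a k (Suc l))"
      using query_val[OF dist b _ _ buf] kl n by simp
    show "real (snd (bb_query G F b a B k l)) \<le> 5 * (real n / real b + real b)"
      using query_cost[OF b, of k l a G F B] kl n by simp
  }
  {
    fix k x assume k: "k < n"
    show "is_buffer G b (a[k := x]) (fst (bb_update G F b a B k x))"
      using update_ok[OF dist buf b dvd] k n by simp
    show "real (snd (bb_update G F b a B k x)) \<le> 2 * real b"
      using update_ok(2)[OF dist buf b dvd, of k x] k n
      by (metis of_nat_le_iff of_nat_mult of_nat_numeral)
  }
  {
    assume lin: "linear_rq G"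
    fix k x assume k: "k < n"
    show "is_buffer G b (a[k := x]) (fst (bb_lin_update G F b a B k x))"
      using lin_update_ok[OF dist lin buf b dvd] k n by simp
    show "real (snd (bb_lin_update G F b a B k x)) \<le> 4"
      using lin_update_ok(2)[OF dist lin buf b dvd, of k x] k n by simp
  }
next
  fix n s :: nat assume h: "0 < s \<and> n = s ^ 2"
  then have s: "0 < s" and n: "n = s^2" by auto
  have sq: "sqrt (real n) = real s" using n by simp
  {
    fix b :: nat assume "0 < b"
    then show "real n / real s + real s \<le> real n / real b + real b" using sq_part[OF s] n by simp
  }
  have e: "real n / real s + real s = 2 * real s" using s n by (simp add: power2_eq_square)
  then show "real n / real s + real s = 2 * sqrt (real n)" using sq by simp
  fix G :: "real list \<Rightarrow> real ^ 'm" and F and a :: "real list" and B k l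
  assume h2: "distributive_rq G F \<and> length a = n \<and> is_buffer G s a B \<and> k \<le> l \<and> l < n"
  then show "real (snd (bb_query G F s a B k l)) \<le> 10 * sqrt (real n)"
    using query_cost[OF s, of k l a G F B] e sq by simp
qed

end
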